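(* Let $k\ge3$, let $G$ be a graph and $L$ a $k$-list assignment for $G$. Let $B$ be a bug in $G$ with root $r$ satisfying $d_G(r)\le k$ and $k+1\le|V(B)|\le 2k$. If $B$ contains two distinct, nonadjacent, hidden vertices, then $B$ is safe in $G$.
   Context: $V_{3^+}(G)$ is the set of vertices of degree at least $3$ in $G$. A bug in $G$ is an induced connected subgraph $B$ together with a vertex $r\in V(B)$, its root, such that $V(B)\cap V_{3^+}(G)\subseteq\{r\}$. A vertex $y\in V(B)$ is hidden if $N_G(y)\subseteq V(B)$. A $k$-list assignment $L$ assigns to each vertex $v$ a set $L(v)$ of exactly $k$ colors; an $L$-coloring is a proper vertex coloring $f$ with $f(v)\in L(v)$. For an integer $n$ and $k\ge1$, $n\bmod^* k$ is the unique $m\in\{1,\dots,k\}$ with $n\equiv m\pmod k$. If $|V(G)|=n\ge 1$, an $L$-coloring $f$ of $G$ is strongly equitable (SE) if every color class has at most $\lceil n/k\rceil$ vertices and the number of colors whose class has exactly $\lceil n/k\rceil$ vertices (the full classes) is at most $n\bmod^* k$; the empty graph is regarded as SE $L$-colorable. A subgraph $S\subseteq G$ is safe in $G$ if every SE $L$-coloring of $G-V(S)$ (with the restriction of $L$) can be extended to an SE $L$-coloring of $G$. *)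

theory Defs
  imports Main
begin

definition graph :: "'a set \<Rightarrow> ('a \<Rightarrow> 'a \<Rightarrow> bool) \<Rightarrow> bool" where
  "graph V E \<longleftrightarrow> finite V \<and> (\<forall>u v. E u v \<longrightarrow> u \<in> V \<and> v \<in> V)
     \<and> (\<forall>u v. E u v \<longrightarrow> E v u) \<and> (\<forall>v. \<not> E v v)"

definition nbhd :: "('a \<Rightarrow> 'a \<Rightarrow> bool) \<Rightarrow> 'a \<Rightarrow> 'a set" where
  "nbhd E v = {u. E v u}"

definition degree :: "('a \<Rightarrow> 'a \<Rightarrow> bool) \<Rightarrow> 'a \<Rightarrow> nat" where
  "degree E v = card (nbhd E v)"

definition V3plus :: "'a set \<Rightarrow> ('a \<Rightarrow> 'a \<Rightarrow> bool) \<Rightarrow> 'a set" where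
  "V3plus V E = {v \<in> V. degree E v \<ge> 3}"

definition induced_connected :: "('a \<Rightarrow> 'a \<Rightarrow> bool) \<Rightarrow> 'a set \<Rightarrow> bool" where
  "induced_connected E S \<longleftrightarrow> S \<noteq> {} \<and>
     (\<forall>u\<in>S. \<forall>v\<in>S. (\<lambda>x y. E x y \<and> x \<in> S \<and> y \<in> S)\<^sup>*\<^sup>* u v)"

definition bug :: "'a set \<Rightarrow> ('a \<Rightarrow> 'a \<Rightarrow> bool) \<Rightarrow> 'a set \<Rightarrow> 'a \<Rightarrow> bool" where
  "bug V E S r \<longleftrightarrow> S \<subseteq> V \<and> induced_connected E S \<and> r \<in> S \<and> S \<inter> V3plus V E \<subseteq> {r}"

definition hidden :: "('a \<Rightarrow> 'a \<Rightarrow> bool) \<Rightarrow> 'a set \<Rightarrow> 'a \<Rightarrow> bool" where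
  "hidden E S y \<longleftrightarrow> y \<in> S \<and> nbhd E y \<subseteq> S"

definition list_assignment :: "'a set \<Rightarrow> nat \<Rightarrow> ('a \<Rightarrow> 'c set) \<Rightarrow> bool" where
  "list_assignment V k L \<longleftrightarrow> (\<forall>v\<in>V. finite (L v) \<and> card (L v) = k)"

definition L_coloring :: "'a set \<Rightarrow> ('a \<Rightarrow> 'a \<Rightarrow> bool) \<Rightarrow> ('a \<Rightarrow> 'c set) \<Rightarrow> ('a \<Rightarrow> 'c) \<Rightarrow> bool" where
  "L_coloring W E L f \<longleftrightarrow> (\<forall>v\<in>W. f v \<in> L v) \<and> (\<forall>u\<in>W. \<forall>v\<in>W. E u v \<longrightarrow> f u \<noteq> f v)"

definition mod_star :: "nat \<Rightarrow> nat \<Rightarrow> nat" where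
  "mod_star n k = (if n mod k = 0 then k else n mod k)"

definition ceil_div :: "nat \<Rightarrow> nat \<Rightarrow> nat" where
  "ceil_div n k = (n + k - 1) div k"

definition color_class :: "'a set \<Rightarrow> ('a \<Rightarrow> 'c) \<Rightarrow> 'c \<Rightarrow> 'a set" where
  "color_class W f c = {v \<in> W. f v = c}"

definition SE_coloring :: "'a set \<Rightarrow> ('a \<Rightarrow> 'a \<Rightarrow> bool) \<Rightarrow> nat \<Rightarrow> ('a \<Rightarrow> 'c set) \<Rightarrow> ('a \<Rightarrow> 'c) \<Rightarrow> bool" where
  "SE_coloring W E k L f \<longleftrightarrow> L_coloring W E L f \<and>
     (W \<noteq> {} \<longrightarrow>
       (\<forall>c. card (color_class W f c) \<le> ceil_div (card W) k) \<and>
       card {c. card (color_class W f c) = ceil_div (card W) k} \<le> mod_star (card W) k)"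

definition safe :: "'a set \<Rightarrow> ('a \<Rightarrow> 'a \<Rightarrow> bool) \<Rightarrow> nat \<Rightarrow> ('a \<Rightarrow> 'c set) \<Rightarrow> 'a set \<Rightarrow> bool" where
  "safe V E k L S \<longleftrightarrow> (\<forall>f. SE_coloring (V - S) E k L f \<longrightarrow>
     (\<exists>g. SE_coloring V E k L g \<and> (\<forall>v\<in>V - S. g v = f v)))"

end

theory Submission
  imports Defs
begin


lemma cd_char:
  assumes "k \<ge> 1" "1 \<le> t" "t \<le> k"
  shows "ceil_div (a*k + t) k = a + 1" "mod_star (a*k + t) k = t"
proof -
  have e: "a*k + t + k - 1 = (t - 1) + (a+1)*k" using assms by (simp add: algebra_simps)
  have "t - 1 < k" using assms by simp
  then have "((t - 1) + (a+1)*k) div k = a + 1" using assms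
    using div_mult_self1[of k "t-1" "a+1"] by simp
  then show "ceil_div (a*k + t) k = a + 1" unfolding ceil_div_def e by simp
  show "mod_star (a*k + t) k = t"
  proof (cases "t = k")
    case True thus ?thesis unfolding mod_star_def by simp
  next
    case False thus ?thesis using assms unfolding mod_star_def by simp
  qed
qed

lemma cd_decomp:
  assumes "k \<ge> 1" "n \<ge> 1"
  shows "n = (ceil_div n k - 1) * k + mod_star n k" "1 \<le> mod_star n k" "mod_star n k \<le> k"
    "ceil_div n k \<ge> 1"
proof -
  have m: "1 \<le> mod_star n k \<and> mod_star n k \<le> k" unfolding mod_star_def using assms
    by (auto simp: less_imp_le_nat)
  obtain a where a: "n = a*k + mod_star n k"
  proof (cases "n mod k = 0")
    case True
    then obtain b where b: "n = k*b" by auto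
    with assms have "b \<ge> 1" by (cases b) auto
    then obtain c where "b = Suc c" by (cases b) auto
    then have "n = c*k + k" using b by simp
    thus ?thesis using that True unfolding mod_star_def by auto
  next
    case False
    thus ?thesis using that[of "n div k"] unfolding mod_star_def by (simp add: mult.commute)
  qed
  have "ceil_div n k = a + 1" using cd_char[of k "mod_star n k" a] m a assms by simp
  thus "n = (ceil_div n k - 1) * k + mod_star n k" "ceil_div n k \<ge> 1" using a by auto
  show "1 \<le> mod_star n k" "mod_star n k \<le> k" using m by auto
qed

lemma cc_union:
  assumes disj: "W \<inter> P = {}" and fP: "finite P" and inj: "inj_on g P"
  shows "color_class (W \<union> P) (\<lambda>v. if v \<in> P then g v else f v) c
           = color_class W f c \<union> {v\<in>P. g v = c}"
    and "card {v\<in>P. g v = c} = (if c \<in> g ` P then 1 else 0)"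
proof -
  show "color_class (W \<union> P) (\<lambda>v. if v \<in> P then g v else f v) c
           = color_class W f c \<union> {v\<in>P. g v = c}"
    using disj unfolding color_class_def by auto
  show "card {v\<in>P. g v = c} = (if c \<in> g ` P then 1 else 0)"
  proof (cases "c \<in> g ` P")
    case True
    then obtain v0 where v0: "v0 \<in> P" "c = g v0" by auto
    have "{v\<in>P. g v = c} = {v0}" using v0 inj unfolding inj_on_def by auto
    thus ?thesis using True by simp
  next
    case False
    then have "{v\<in>P. g v = c} = {}" by auto
    then have "card {v\<in>P. g v = c} = 0" by (simp only: card.empty)
    thus ?thesis using False by simp
  qed
qed

lemma cc_card_union:
  assumes disj: "W \<inter> P = {}" and fP: "finite P" and fW: "finite W" and inj: "inj_on g P"
  shows "card (color_class (W \<union> P) (\<lambda>v. if v \<in> P then g v else f v) c)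
           = card (color_class W f c) + (if c \<in> g ` P then 1 else 0)"
proof -
  have "finite (color_class W f c)" using fW unfolding color_class_def by auto
  moreover have "finite {v\<in>P. g v = c}" using fP by auto
  moreover have "color_class W f c \<inter> {v\<in>P. g v = c} = {}" using disj unfolding color_class_def by auto
  ultimately have "card (color_class W f c \<union> {v\<in>P. g v = c}) = card (color_class W f c) + card {v\<in>P. g v = c}"
    by (rule card_Un_disjoint)
  then show ?thesis using cc_union(1)[OF disj fP inj, of f c] cc_union(2)[OF disj fP inj, of c] by simp
qed

lemma full_finite:
  assumes "finite W" "Q \<ge> 1"
  shows "{c. card (color_class W f c) = Q} \<subseteq> f ` W"
proof
  fix c assume "c \<in> {c. card (color_class W f c) = Q}"
  then have "color_class W f c \<noteq> {}" using assms by auto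
  then show "c \<in> f ` W" unfolding color_class_def by auto
qed

lemma ext_block:
  fixes W P :: "'a set" and f g :: "'a \<Rightarrow> 'c"
  assumes k1: "k \<ge> 1" and fW: "finite W" and fP: "finite P" and disj: "W \<inter> P = {}"
    and cP: "card P \<le> k" and nP: "P \<noteq> {}"
    and SE: "SE_coloring W E k L f" and inj: "inj_on g P" and gL: "\<forall>v\<in>P. g v \<in> L v"
    and prp: "\<forall>v\<in>P. \<forall>u\<in>W. E v u \<longrightarrow> g v \<noteq> f u"
    and sym: "\<forall>u v. E u v \<longrightarrow> E v u" and irr: "\<forall>v. \<not> E v v"
    and cond: "card W mod k = 0 \<or> card P = k \<or>
       (\<forall>v\<in>P. card (color_class W f (g v)) < ceil_div (card W) k)"
  shows "SE_coloring (W \<union> P) E k L (\<lambda>v. if v \<in> P then g v else f v)"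
proof -
  define h where "h = (\<lambda>v. if v \<in> P then g v else f v)"
  have Lf: "L_coloring W E L f" using SE unfolding SE_coloring_def by auto
  have Lh: "L_coloring (W \<union> P) E L h"
    unfolding L_coloring_def
  proof (intro conjI ballI impI)
    fix v assume "v \<in> W \<union> P"
    thus "h v \<in> L v" using Lf gL disj unfolding h_def L_coloring_def by auto
  next
    fix u v assume uv: "u \<in> W \<union> P" "v \<in> W \<union> P" "E u v"
    show "h u \<noteq> h v"
    proof (cases "u \<in> P")
      case True
      show ?thesis
      proof (cases "v \<in> P")
        case True
        have "u \<noteq> v" using uv irr by auto
        thus ?thesis using \<open>u \<in> P\<close> True inj unfolding h_def inj_on_def by auto
      next
        case False
        then have "v \<in> W" using uv by auto
        thus ?thesis using prp \<open>u \<in> P\<close> False uv unfolding h_def by auto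
      qed
    next
      case False
      then have uW: "u \<in> W" using uv by auto
      show ?thesis
      proof (cases "v \<in> P")
        case True
        have "E v u" using sym uv by auto
        thus ?thesis using prp True uW False unfolding h_def by force
      next
        case False
        then have "v \<in> W" using uv by auto
        thus ?thesis using Lf uW uv \<open>u \<notin> P\<close> False unfolding h_def L_coloring_def by auto
      qed
    qed
  qed
  define n where "n = card W"
  define b where "b = card P"
  have b1: "b \<ge> 1" using nP fP unfolding b_def by (simp add: Suc_le_eq card_gt_0_iff)
  have bk: "b \<le> k" using cP b_def by simp
  have n': "card (W \<union> P) = n + b" using card_Un_disjoint[OF fW fP disj] n_def b_def by simp
  define cnt where "cnt = (\<lambda>c. card (color_class W f c))"
  define cnt' where "cnt' = (\<lambda>c. card (color_class (W \<union> P) h c))"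
  have cnt'_eq: "\<And>c. cnt' c = cnt c + (if c \<in> g ` P then 1 else 0)"
    unfolding cnt'_def cnt_def h_def using cc_card_union[OF disj fP fW inj] by simp
  have cntW: "W \<noteq> {} \<Longrightarrow> cnt c \<le> ceil_div n k" for c
    using SE unfolding SE_coloring_def cnt_def n_def by auto
  have fullW: "W \<noteq> {} \<Longrightarrow> card {c. cnt c = ceil_div n k} \<le> mod_star n k"
    using SE unfolding SE_coloring_def cnt_def n_def by auto
  have cnt0: "W = {} \<Longrightarrow> cnt c = 0" for c unfolding cnt_def color_class_def by simp
  have gPfin: "finite (g ` P)" using fP by simp
  have gPcard: "card (g ` P) \<le> b" using card_image_le[OF fP] b_def by simp
  have main: "(\<forall>c. cnt' c \<le> ceil_div (n + b) k) \<and>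
      card {c. cnt' c = ceil_div (n + b) k} \<le> mod_star (n + b) k"
  proof (cases "n mod k = 0")
    case True
    define a where "a = n div k"
    have a: "n = a * k" using div_mult_mod_eq[of n k] True a_def by simp
    have Q': "ceil_div (n + b) k = a + 1" "mod_star (n + b) k = b"
      using cd_char[OF k1 b1 bk, of a] a by auto
    have ca: "cnt c \<le> a" for c
    proof (cases "W = {}")
      case True thus ?thesis using cnt0 by simp
    next
      case False
      then have "n \<ge> 1" using fW n_def by (simp add: Suc_le_eq card_gt_0_iff)
      then have "a \<ge> 1" using a by (cases a) auto
      then obtain a' where a': "a = Suc a'" by (cases a) auto
      have "n = a' * k + k" using a a' by simp
      then have "ceil_div n k = a" using cd_char[OF k1 k1 order_refl, of a'] a' by simp
      thus ?thesis using cntW[OF False, of c] by simp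
    qed
    have "\<forall>c. cnt' c \<le> a + 1"
    proof
      fix c show "cnt' c \<le> a + 1" using ca[of c] cnt'_eq[of c] by simp
    qed
    moreover have "{c. cnt' c = a + 1} \<subseteq> g ` P"
    proof
      fix c assume "c \<in> {c. cnt' c = a + 1}"
      then show "c \<in> g ` P" using ca[of c] cnt'_eq[of c] by (cases "c \<in> g ` P") auto
    qed
    then have "card {c. cnt' c = a + 1} \<le> b" using card_mono[OF gPfin] gPcard le_trans by blast
    ultimately show ?thesis using Q' by simp
  next
    case False
    then have Wne: "W \<noteq> {}" using n_def by auto
    then have n1: "n \<ge> 1" using fW n_def by (simp add: Suc_le_eq card_gt_0_iff)
    define Q where "Q = ceil_div n k"
    define R where "R = mod_star n k"
    have dec: "n = (Q - 1) * k + R" "1 \<le> R" "R \<le> k" "Q \<ge> 1"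
      using cd_decomp[OF k1 n1] Q_def R_def by auto
    have Rk: "R < k" using False R_def k1 unfolding mod_star_def by auto
    have cQ: "cnt c \<le> Q" for c using cntW[OF Wne] Q_def by simp
    have fullfin: "finite {c. cnt c = Q}"
      using full_finite[OF fW dec(4), of f] fW finite_subset unfolding cnt_def by blast
    have fullR: "card {c. cnt c = Q} \<le> R" using fullW[OF Wne] Q_def R_def by simp
    show ?thesis
    proof (cases "b = k")
      case True
      obtain Q0 where Q0: "Q = Suc Q0" using dec(4) by (cases Q) auto
      have "n + b = Q * k + R" using dec(1) True Q0 by simp
      then have Q': "ceil_div (n + b) k = Q + 1" "mod_star (n + b) k = R"
        using cd_char[OF k1 dec(2) dec(3), of Q] by auto
      have "\<forall>c. cnt' c \<le> Q + 1"
      proof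
        fix c show "cnt' c \<le> Q + 1" using cQ[of c] cnt'_eq[of c] by simp
      qed
      moreover have "{c. cnt' c = Q + 1} \<subseteq> {c. cnt c = Q}"
      proof
        fix c assume "c \<in> {c. cnt' c = Q + 1}"
        then show "c \<in> {c. cnt c = Q}" using cQ[of c] cnt'_eq[of c] by (cases "c \<in> g ` P") auto
      qed
      then have "card {c. cnt' c = Q + 1} \<le> R" using card_mono[OF fullfin] fullR le_trans by blast
      ultimately show ?thesis using Q' by simp
    next
      case bk': False
      then have av: "\<forall>v\<in>P. cnt (g v) < Q" using cond False n_def b_def Q_def cnt_def by auto
      have c'Q: "cnt' c \<le> Q" for c
      proof (cases "c \<in> g ` P")
        case True
        then obtain v where "v \<in> P" "c = g v" by auto
        then have "cnt c < Q" using av by auto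
        thus ?thesis using cnt'_eq[of c] True by simp
      next
        case False thus ?thesis using cnt'_eq[of c] cQ[of c] by simp
      qed
      show ?thesis
      proof (cases "R + b \<le> k")
        case True
        have e: "n + b = (Q - 1) * k + (R + b)" using dec by simp
        have "1 \<le> R + b" using dec by simp
        then have Q': "ceil_div (n + b) k = Q" "mod_star (n + b) k = R + b"
          using cd_char[OF k1 _ True, of "Q - 1"] dec(4) unfolding e by auto
        have "{c. cnt' c = Q} \<subseteq> {c. cnt c = Q} \<union> g ` P"
        proof
          fix c assume "c \<in> {c. cnt' c = Q}"
          then show "c \<in> {c. cnt c = Q} \<union> g ` P" using cnt'_eq[of c] by (cases "c \<in> g ` P") auto
        qed
        then have "card {c. cnt' c = Q} \<le> card ({c. cnt c = Q} \<union> g ` P)"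
          using card_mono fullfin gPfin by blast
        also have "\<dots> \<le> R + b" using card_Un_le[of "{c. cnt c = Q}" "g ` P"] fullR gPcard by linarith
        finally show ?thesis using Q' c'Q by simp
      next
        case False
        obtain Q0 where Q0: "Q = Suc Q0" using dec(4) by (cases Q) auto
        have "n + b = Q * k + (R + b - k)" using dec(1) False Q0 by simp
        moreover have "1 \<le> R + b - k" "R + b - k \<le> k" using False bk Rk by auto
        ultimately have Q': "ceil_div (n + b) k = Q + 1"
          using cd_char[OF k1, of "R + b - k" Q] by auto
        have "{c. cnt' c = Q + 1} = {}" using c'Q by (auto simp: le_imp_less_Suc less_imp_neq)
        thus ?thesis using Q' c'Q by (simp add: le_SucI)
      qed
    qed
  qed
  show ?thesis unfolding SE_coloring_def using Lh main n' unfolding h_def cnt'_def by simp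
qed

lemma greedy:
  fixes P :: "'a set" and L :: "'a \<Rightarrow> 'c set" and F :: "'a \<Rightarrow> 'c set" and h :: "'a \<Rightarrow> nat"
  assumes "finite P" "\<forall>v\<in>P. finite (L v) \<and> card (L v) = k"
    "\<forall>v\<in>P. finite (F v) \<and> card (F v) \<le> h v"
    "\<forall>v\<in>P. h v + card {u\<in>P. h v \<le> h u} \<le> k"
  shows "\<exists>g. inj_on g P \<and> (\<forall>v\<in>P. g v \<in> L v \<and> g v \<notin> F v)"
  using assms
proof (induction "card P" arbitrary: P rule: less_induct)
  case less
  show ?case
  proof (cases "P = {}")
    case True thus ?thesis by auto
  next
    case False
    have "Min (h ` P) \<in> h ` P" using Min_in[of "h ` P"] False less.prems(1) by auto
    then obtain v where v: "v \<in> P" "h v = Min (h ` P)" by (metis imageE)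
    have vmin: "\<forall>u\<in>P. h v \<le> h u" using v less.prems(1) by auto
    define P' where "P' = P - {v}"
    have fP': "finite P'" using less.prems(1) P'_def by auto
    have cP': "card P' < card P" using card_Diff1_less[OF less.prems(1) v(1)] P'_def by simp
    have c3: "\<forall>w\<in>P'. h w + card {u\<in>P'. h w \<le> h u} \<le> k"
    proof
      fix w assume w: "w \<in> P'"
      have "card {u\<in>P'. h w \<le> h u} \<le> card {u\<in>P. h w \<le> h u}"
        by (rule card_mono) (use less.prems(1) P'_def in auto)
      thus "h w + card {u\<in>P'. h w \<le> h u} \<le> k" using less.prems(4) w P'_def by fastforce
    qed
    obtain g' where g': "inj_on g' P'" "\<forall>w\<in>P'. g' w \<in> L w \<and> g' w \<notin> F w"
      using less.hyps[OF cP' fP'] less.prems(2,3) c3 P'_def by auto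
    have "{u\<in>P. h v \<le> h u} = P" using vmin by auto
    then have hk: "h v + card P \<le> k" using less.prems(4) v by auto
    have cP: "card P = card P' + 1" using cP' v less.prems(1) P'_def by (simp add: card_Suc_Diff1)
    have "card (F v \<union> g' ` P') \<le> card (F v) + card (g' ` P')" by (rule card_Un_le)
    also have "\<dots> \<le> h v + card P'" using less.prems(3) v card_image_le[OF fP', of g'] by fastforce
    finally have cF: "card (F v \<union> g' ` P') < k" using hk cP by linarith
    have fF: "finite (F v \<union> g' ` P')" using less.prems(3) v fP' by auto
    have "card (L v) - card (F v \<union> g' ` P') \<le> card (L v - (F v \<union> g' ` P'))"
      by (rule diff_card_le_card_Diff[OF fF])
    moreover have "card (L v) = k" using less.prems(2) v by auto
    ultimately have "card (L v - (F v \<union> g' ` P')) > 0" using cF by linarith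
    then obtain c where c: "c \<in> L v" "c \<notin> F v" "c \<notin> g' ` P'" by (auto simp: card_gt_0_iff)
    define g where "g = g'(v := c)"
    have "inj_on g P"
      unfolding inj_on_def
    proof (intro ballI impI)
      fix a b assume ab: "a \<in> P" "b \<in> P" "g a = g b"
      show "a = b"
      proof (cases "a = v")
        case True
        thus ?thesis using ab c(3) P'_def unfolding g_def by (cases "b = v") force+
      next
        case False
        thus ?thesis using ab c(3) P'_def g'(1) unfolding g_def inj_on_def by (cases "b = v") force+
      qed
    qed
    moreover have "\<forall>w\<in>P. g w \<in> L w \<and> g w \<notin> F w" using g'(2) c P'_def unfolding g_def by auto
    ultimately show ?thesis by blast
  qed
qed

lemma card_ins_le: "finite A \<Longrightarrow> card (insert x A) \<le> Suc (card A)"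
  by (simp add: card_insert_if)

lemma three_le_card:
  assumes "finite A" "a \<in> A" "b \<in> A" "c \<in> A" "a \<noteq> b" "a \<noteq> c" "b \<noteq> c"
  shows "card A \<ge> 3"
proof -
  have "card {a, b, c} = 3" using assms by simp
  moreover have "card {a, b, c} \<le> card A" using assms by (intro card_mono) auto
  ultimately show ?thesis by simp
qed

lemma nb_fin:
  assumes "graph V E" shows "finite (nbhd E v)" "nbhd E v \<subseteq> V"
  using assms unfolding graph_def nbhd_def by (auto intro: finite_subset)

lemma nonroot_deg:
  assumes "graph V E" "bug V E S r" "v \<in> S" "v \<noteq> r"
  shows "card (nbhd E v) \<le> 2"
proof (rule ccontr)
  assume "\<not> card (nbhd E v) \<le> 2"
  then have "v \<in> V3plus V E" using assms unfolding V3plus_def degree_def bug_def by auto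
  thus False using assms unfolding bug_def by auto
qed

lemma conn_nbr:
  assumes "induced_connected E S" "v \<in> S" "u \<in> S" "u \<noteq> v"
  shows "\<exists>z\<in>S. E v z"
proof -
  have "(\<lambda>x y. E x y \<and> x \<in> S \<and> y \<in> S)\<^sup>*\<^sup>* v u" using assms unfolding induced_connected_def by auto
  then show ?thesis
  proof (cases rule: converse_rtranclpE)
    case base thus ?thesis using assms by simp
  next
    case (step z) thus ?thesis by auto
  qed
qed

lemma conn_nbr2:
  assumes "induced_connected E S" "v \<in> S" "card S \<ge> 2"
  shows "\<exists>z\<in>S. E v z"
proof -
  have "S - {v} \<noteq> {}"
  proof
    assume "S - {v} = {}"
    then have "S \<subseteq> {v}" by auto
    then have "card S \<le> card {v}" by (intro card_mono) auto
    thus False using assms by simp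
  qed
  then obtain u where "u \<in> S" "u \<noteq> v" by auto
  thus ?thesis using conn_nbr[OF assms(1,2)] by blast
qed

lemma conn_closed:
  assumes "induced_connected E S" "X \<subseteq> S" "x0 \<in> X"
    "\<forall>a\<in>X. \<forall>b\<in>S. E a b \<longrightarrow> b \<in> X"
  shows "X = S"
proof
  show "S \<subseteq> X"
  proof
    fix v assume "v \<in> S"
    have "(\<lambda>x y. E x y \<and> x \<in> S \<and> y \<in> S)\<^sup>*\<^sup>* x0 v"
      using assms \<open>v \<in> S\<close> unfolding induced_connected_def by auto
    then show "v \<in> X"
      by (induction rule: rtranclp_induct) (use assms in auto)
  qed
qed (use assms in auto)



lemma blockT_cond:
  fixes ov :: "'a \<Rightarrow> nat"
  assumes "finite T" "gv \<in> T" "ov gv = 0" "\<forall>v\<in>T. ov v \<le> 1" "c + card T \<le> k"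
  shows "\<forall>v\<in>T. (c + ov v) + card {u\<in>T. c + ov v \<le> c + ov u} \<le> k"
proof
  fix v assume v: "v \<in> T"
  show "(c + ov v) + card {u\<in>T. c + ov v \<le> c + ov u} \<le> k"
  proof (cases "ov v = 0")
    case True
    have "card {u\<in>T. c + ov v \<le> c + ov u} \<le> card T" using assms(1) by (intro card_mono) auto
    thus ?thesis using True assms by simp
  next
    case False
    have "ov v \<le> 1" using assms(4) v by blast
    then have o1: "ov v = 1" using False by simp
    have "{u\<in>T. c + ov v \<le> c + ov u} \<subseteq> T - {gv}" using o1 assms by auto
    then have "card {u\<in>T. c + ov v \<le> c + ov u} \<le> card (T - {gv})" using assms(1) by (intro card_mono) auto
    also have "\<dots> = card T - 1" using assms by simp
    moreover have "card T \<ge> 1" using assms(1,2) by (simp add: Suc_le_eq card_gt_0_iff) blast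
    ultimately show ?thesis using o1 assms(5) by linarith
  qed
qed

lemma blockD_cond:
  fixes hv :: "'a \<Rightarrow> nat"
  assumes "finite D" "card D = k" "k \<ge> 3" "hh \<in> D" "hv hh = 0" "u \<in> D" "u \<noteq> hh" "hv u \<le> 1"
    "\<forall>v\<in>D. v \<noteq> r \<longrightarrow> hv v \<le> 2" "r \<in> D \<longrightarrow> hv r + 1 \<le> k"
  shows "\<forall>v\<in>D. hv v + card {w\<in>D. hv v \<le> hv w} \<le> k"
proof
  fix v assume v: "v \<in> D"
  consider "hv v = 0" | "hv v = 1" | "hv v = 2" | "hv v \<ge> 3" by linarith
  then show "hv v + card {w\<in>D. hv v \<le> hv w} \<le> k"
  proof cases
    case 1
    have "card {w\<in>D. hv v \<le> hv w} \<le> card D" using assms(1) by (intro card_mono) auto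
    thus ?thesis using 1 assms by simp
  next
    case 2
    have "{w\<in>D. hv v \<le> hv w} \<subseteq> D - {hh}" using 2 assms by auto
    then have "card {w\<in>D. hv v \<le> hv w} \<le> card (D - {hh})" using assms(1) by (intro card_mono) auto
    also have "\<dots> = k - 1" using assms by simp
    finally show ?thesis using 2 assms by linarith
  next
    case 3
    have "{w\<in>D. hv v \<le> hv w} \<subseteq> D - {hh, u}" using 3 assms by auto
    then have "card {w\<in>D. hv v \<le> hv w} \<le> card (D - {hh, u})" using assms(1) by (intro card_mono) auto
    also have "\<dots> = k - 2" using assms by (simp add: card_Diff_subset)
    finally show ?thesis using 3 assms by linarith
  next
    case 4
    have big: "w = r" if "w \<in> D" "hv w \<ge> 3" for w
    proof (rule ccontr)
      assume "w \<noteq> r"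
      then have "hv w \<le> 2" using assms(9) that(1) by blast
      thus False using that(2) by simp
    qed
    have vr: "v = r" using big[OF v 4] .
    have "{w\<in>D. hv v \<le> hv w} \<subseteq> {r}" using 4 big by force
    then have "card {w\<in>D. hv v \<le> hv w} \<le> card {r}" by (intro card_mono) auto
    thus ?thesis using assms vr v by simp
  qed
qed

lemma blockT2_cond:
  fixes hv :: "'a \<Rightarrow> nat"
  assumes "finite P" "card P + 2 \<le> k" "\<forall>v\<in>P. hv v \<le> 2"
  shows "\<forall>v\<in>P. hv v + card {w\<in>P. hv v \<le> hv w} \<le> k"
proof
  fix v assume "v \<in> P"
  have "card {w\<in>P. hv v \<le> hv w} \<le> card P" using assms(1) by (intro card_mono) auto
  moreover have "hv v \<le> 2" using assms(3) \<open>v \<in> P\<close> by blast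
  ultimately show "hv v + card {w\<in>P. hv v \<le> hv w} \<le> k" using assms(2) by linarith
qed

lemma graph_sym: "graph V E \<Longrightarrow> E u v \<Longrightarrow> E v u" unfolding graph_def by blast
lemma graph_irr: "graph V E \<Longrightarrow> \<not> E v v" unfolding graph_def by blast
lemma hidden_S: "hidden E S v \<Longrightarrow> v \<in> S" unfolding hidden_def by blast
lemma hidden_N: "hidden E S v \<Longrightarrow> nbhd E v \<subseteq> S" unfolding hidden_def by blast
lemma in_nbhd: "(u \<in> nbhd E v) = E v u" unfolding nbhd_def by simp

lemma card_le_2_third:
  assumes G: "graph V E" and "card (nbhd E a) \<le> 2" "E a p" "E a q" "E a b" "p \<noteq> q" "b \<noteq> p" "b \<noteq> q"
  shows False
proof -
  have "card (nbhd E a) \<ge> 3" using three_le_card[OF nb_fin(1)[OF G], of p a q b] assms(3-8)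
    by (simp add: in_nbhd)
  thus False using assms(2) by simp
qed

lemma hidden_nbr_root:
  assumes G: "graph V E" and B: "bug V E S r" and x: "hidden E S x" and y: "hidden E S y" and xy: "x \<noteq> y"
  shows "\<exists>\<rho>. E r \<rho> \<and> hidden E S \<rho>"
proof (rule ccontr)
  assume no: "\<not> (\<exists>\<rho>. E r \<rho> \<and> hidden E S \<rho>)"
  define X where "X = insert r (nbhd E r \<inter> S)"
  have closed: "\<forall>a\<in>X. \<forall>b\<in>S. E a b \<longrightarrow> b \<in> X"
  proof (intro ballI impI)
    fix a b assume a: "a \<in> X" and b: "b \<in> S" and ab: "E a b"
    show "b \<in> X"
    proof (cases "a = r")
      case True thus ?thesis using b ab unfolding X_def nbhd_def by auto
    next
      case False
      then have ar: "E r a" "a \<in> S" using a unfolding X_def nbhd_def by auto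
      have "\<not> hidden E S a" using no ar by auto
      then obtain z where z: "z \<in> nbhd E a" "z \<notin> S" using ar unfolding hidden_def by auto
      have d2: "card (nbhd E a) \<le> 2" using nonroot_deg[OF G B ar(2) False] .
      show "b \<in> X"
      proof (rule ccontr)
        assume "b \<notin> X"
        then have "b \<noteq> r" unfolding X_def by auto
        have "b \<noteq> z" using b z by auto
        have "r \<noteq> z" using B z unfolding bug_def by auto
        show False using card_le_2_third[OF G d2, of r z b] graph_sym[OF G ar(1)] z(1) ab
            \<open>b \<noteq> r\<close> \<open>b \<noteq> z\<close> \<open>r \<noteq> z\<close> by (simp add: in_nbhd)
      qed
    qed
  qed
  have XS: "X \<subseteq> S" using B unfolding X_def bug_def by auto
  have "X = S" using conn_closed[of E S X r] B closed XS unfolding bug_def X_def by auto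
  then have "x \<in> X" "y \<in> X" using hidden_S[OF x] hidden_S[OF y] by auto
  then have "x = r" "y = r" using no x y unfolding X_def nbhd_def by auto
  thus False using xy by simp
qed

definition good_config where
  "good_config E S r gv K hh u \<longleftrightarrow> hidden E S gv \<and> K \<subseteq> S \<and> gv \<notin> K \<and> finite K \<and> card K \<le> 3 \<and>
     hh \<in> K \<and> nbhd E hh \<subseteq> K \<and> u \<in> K \<and> u \<noteq> hh \<and> u \<noteq> r \<and> (\<exists>z\<in>K. E u z) \<and>
     ((r \<in> K \<and> (\<exists>z\<in>K. E r z)) \<or> r = gv)"

lemma config_case1:
  assumes G: "graph V E" and B: "bug V E S r" and cS: "card S \<ge> 2"
    and b: "b \<noteq> r" "hidden E S b" "\<not> E r b" and rh: "hidden E S r"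
  shows "\<exists>gv K hh u. good_config E S r gv K hh u"
proof -
  have bS: "b \<in> S" using hidden_S[OF b(2)] .
  have ic: "induced_connected E S" using B unfolding bug_def by auto
  obtain z where z: "z \<in> S" "E b z" using conn_nbr2[OF ic bS cS] by auto
  have zr: "z \<noteq> r" using z b graph_sym[OF G] by blast
  have zb: "z \<noteq> b" using z graph_irr[OF G] by blast
  define K where "K = insert b (nbhd E b)"
  have fK: "finite K" using nb_fin[OF G] K_def by auto
  have "card K \<le> Suc (card (nbhd E b))" using card_ins_le[OF nb_fin(1)[OF G]] K_def by simp
  then have cK: "card K \<le> 3" using nonroot_deg[OF G B bS b(1)] by simp
  have KS: "K \<subseteq> S" using bS hidden_N[OF b(2)] K_def by auto
  have rK: "r \<notin> K" using b K_def graph_sym[OF G, of b r] by (auto simp: in_nbhd)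
  have "z \<in> K" using z K_def by (simp add: in_nbhd)
  moreover have "b \<in> K" using K_def by simp
  moreover have "E z b" using graph_sym[OF G z(2)] .
  ultimately have "good_config E S r r K b z"
    unfolding good_config_def using rh fK cK KS rK zr zb K_def by auto
  thus ?thesis by blast
qed

lemma config_case2:
  assumes G: "graph V E" and B: "bug V E S r" and cS: "card S \<ge> 4"
    and x: "hidden E S x" and y: "hidden E S y" and xy: "x \<noteq> y" "\<not> E x y"
    and xr: "x \<noteq> r" and yr: "y \<noteq> r"
  shows "\<exists>gv K hh u. good_config E S r gv K hh u"
proof -
  have ic: "induced_connected E S" and rS: "r \<in> S" and SV: "S \<subseteq> V" using B unfolding bug_def by auto
  have fS: "finite S" using G SV unfolding graph_def by (auto intro: finite_subset)
  obtain \<rho> where \<rho>: "E r \<rho>" "hidden E S \<rho>" using hidden_nbr_root[OF G B x y xy(1)] by blast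
  have \<rho>S: "\<rho> \<in> S" using hidden_S[OF \<rho>(2)] .
  have \<rho>r: "\<rho> \<noteq> r" using \<rho>(1) graph_irr[OF G] by blast
  have \<rho>N: "nbhd E \<rho> \<subseteq> S" using hidden_N[OF \<rho>(2)] .
  have \<rho>d: "card (nbhd E \<rho>) \<le> 2" using nonroot_deg[OF G B \<rho>S \<rho>r] .
  have Er\<rho>: "E \<rho> r" using graph_sym[OF G \<rho>(1)] .
  obtain g0 where g0: "g0 = x \<or> g0 = y" "g0 \<notin> insert \<rho> (nbhd E \<rho>)"
  proof -
    have "\<not> (x \<in> insert \<rho> (nbhd E \<rho>) \<and> y \<in> insert \<rho> (nbhd E \<rho>))"
    proof
      assume a: "x \<in> insert \<rho> (nbhd E \<rho>) \<and> y \<in> insert \<rho> (nbhd E \<rho>)"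
      show False
      proof (cases "x = \<rho>")
        case True
        then have "E \<rho> y" using a xy by (auto simp: in_nbhd)
        thus False using True xy by simp
      next
        case False
        note xf = False
        show False
        proof (cases "y = \<rho>")
          case True
          then have "E \<rho> x" using a xf by (auto simp: in_nbhd)
          thus False using True xy graph_sym[OF G, of y x] by simp
        next
          case False
          then have "E \<rho> x" "E \<rho> y" using a xf by (auto simp: in_nbhd)
          thus False using card_le_2_third[OF G \<rho>d Er\<rho>, of x y] xy xr yr by auto
        qed
      qed
    qed
    thus ?thesis using that by blast
  qed
  have g0h: "hidden E S g0" using g0 x y by auto
  have g0r: "g0 \<noteq> r" using g0 xr yr by auto
  have g0S: "g0 \<in> S" using hidden_S[OF g0h] .
  have g0\<rho>: "g0 \<noteq> \<rho>" "\<not> E \<rho> g0" using g0(2) by (auto simp: in_nbhd)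
  show ?thesis
  proof (cases "\<exists>a. E \<rho> a \<and> a \<noteq> r")
    case True
    then obtain a where a: "E \<rho> a" "a \<noteq> r" by blast
    define K where "K = insert \<rho> (nbhd E \<rho>)"
    have aS: "a \<in> S" using a \<rho>N by (auto simp: in_nbhd)
    have fK: "finite K" using nb_fin[OF G] K_def by auto
    have "card K \<le> Suc (card (nbhd E \<rho>))" using card_ins_le[OF nb_fin(1)[OF G]] K_def by simp
    then have cK: "card K \<le> 3" using \<rho>d by simp
    have KS: "K \<subseteq> S" using \<rho>S \<rho>N K_def by auto
    have "a \<noteq> \<rho>" using a graph_irr[OF G] by blast
    moreover have "a \<in> K" "\<rho> \<in> K" "r \<in> K" using a Er\<rho> K_def by (auto simp: in_nbhd)
    moreover have "E a \<rho>" using graph_sym[OF G a(1)] .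
    ultimately have "good_config E S r g0 K \<rho> a"
      unfolding good_config_def using g0h fK cK KS g0(2) a \<rho>(1) K_def by auto
    thus ?thesis by blast
  next
    case False
    then have N\<rho>: "nbhd E \<rho> \<subseteq> {r}" by (auto simp: in_nbhd)
    show ?thesis
    proof (cases "\<exists>u'. u' \<in> S \<and> E r u' \<and> u' \<noteq> \<rho> \<and> u' \<noteq> g0")
      case True
      then obtain u' where u': "u' \<in> S" "E r u'" "u' \<noteq> \<rho>" "u' \<noteq> g0" by blast
      define K where "K = {\<rho>, r, u'}"
      have cK: "card K \<le> 3" unfolding K_def by (simp add: card_insert_if)
      have u'r: "u' \<noteq> r" using u' graph_irr[OF G] by blast
      have "E u' r" using graph_sym[OF G u'(2)] .
      then have "good_config E S r g0 K \<rho> u'"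
        unfolding good_config_def using g0h cK u' u'r \<rho>S rS N\<rho> g0\<rho> g0r \<rho>(1) K_def by auto
      thus ?thesis by blast
    next
      case False
      then have onlyr: "\<forall>u'. u' \<in> S \<and> E r u' \<longrightarrow> u' = \<rho> \<or> u' = g0" by blast
      have Erg: "E r g0"
      proof (rule ccontr)
        assume nE: "\<not> E r g0"
        have "{r, \<rho>} = S"
        proof (rule conn_closed[OF ic])
          show "{r, \<rho>} \<subseteq> S" using rS \<rho>S by auto
          show "r \<in> {r, \<rho>}" by simp
          show "\<forall>a\<in>{r, \<rho>}. \<forall>b\<in>S. E a b \<longrightarrow> b \<in> {r, \<rho>}"
            using onlyr nE N\<rho> by (auto simp: in_nbhd)
        qed
        moreover have "card {r, \<rho>} \<le> 2" by (simp add: card_insert_if)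
        ultimately have "card S \<le> 2" by simp
        thus False using cS by simp
      qed
      have Eg0r: "E g0 r" using graph_sym[OF G Erg] .
      obtain a where a: "a \<in> S" "E g0 a" "a \<noteq> r"
      proof -
        have "\<exists>a. a \<in> S \<and> E g0 a \<and> a \<noteq> r"
        proof (rule ccontr)
          assume nE: "\<not> (\<exists>a. a \<in> S \<and> E g0 a \<and> a \<noteq> r)"
          have "{r, \<rho>, g0} = S"
          proof (rule conn_closed[OF ic])
            show "{r, \<rho>, g0} \<subseteq> S" using rS \<rho>S g0S by auto
            show "r \<in> {r, \<rho>, g0}" by simp
            show "\<forall>a\<in>{r, \<rho>, g0}. \<forall>b\<in>S. E a b \<longrightarrow> b \<in> {r, \<rho>, g0}"
              using onlyr nE N\<rho> by (auto simp: in_nbhd)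
          qed
          moreover have "card {r, \<rho>, g0} \<le> 3" by (simp add: card_insert_if)
          ultimately have "card S \<le> 3" by simp
          thus False using cS by simp
        qed
        thus ?thesis using that by blast
      qed
      have g0d: "card (nbhd E g0) \<le> 2" using nonroot_deg[OF G B g0S g0r] .
      have Ng0: "nbhd E g0 \<subseteq> {r, a}"
      proof
        fix b assume b: "b \<in> nbhd E g0"
        show "b \<in> {r, a}"
        proof (rule ccontr)
          assume "b \<notin> {r, a}"
          then show False using card_le_2_third[OF G g0d Eg0r a(2), of b] a(3) b by (auto simp: in_nbhd)
        qed
      qed
      have a\<rho>: "a \<noteq> \<rho>"
      proof
        assume "a = \<rho>"
        then have "E \<rho> g0" using graph_sym[OF G a(2)] by simp
        thus False using g0\<rho> by simp
      qed
      have ag0: "a \<noteq> g0" using a graph_irr[OF G] by blast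
      define K where "K = {g0, r, a}"
      have cK: "card K \<le> 3" unfolding K_def by (simp add: card_insert_if)
      have "E a g0" using graph_sym[OF G a(2)] .
      then have "good_config E S r \<rho> K g0 a"
        unfolding good_config_def using \<rho>(2) cK a g0S rS Ng0 a\<rho> ag0 g0\<rho> \<rho>r Erg K_def by auto
      thus ?thesis by blast
    qed
  qed
qed

lemma config_exists:
  assumes G: "graph V E" and B: "bug V E S r" and cS: "card S \<ge> 4"
    and ex: "\<exists>x\<in>S. \<exists>y\<in>S. x \<noteq> y \<and> \<not> E x y \<and> hidden E S x \<and> hidden E S y"
  shows "\<exists>gv K hh u. good_config E S r gv K hh u"
proof -
  obtain x y where xy: "x \<in> S" "y \<in> S" "x \<noteq> y" "\<not> E x y" "hidden E S x" "hidden E S y"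
    using ex by blast
  have cS2: "card S \<ge> 2" using cS by simp
  show ?thesis
  proof (cases "x = r")
    case True
    thus ?thesis using config_case1[OF G B cS2, of y] xy by auto
  next
    case False
    note xr = False
    show ?thesis
    proof (cases "y = r")
      case True
      have "\<not> E r x" using xy(4) True graph_sym[OF G, of r x] by auto
      thus ?thesis using config_case1[OF G B cS2, of x] xy True xr by auto
    next
      case False
      thus ?thesis using config_case2[OF G B cS xy(5) xy(6) xy(3) xy(4) xr] by auto
    qed
  qed
qed

lemma block_step:
  fixes col :: "'a \<Rightarrow> 'c" and L :: "'a \<Rightarrow> 'c set" and hv :: "'a \<Rightarrow> nat"
  assumes k1: "k \<ge> 1" and G: "graph V E" and LA: "list_assignment V k L"
    and WV: "W \<subseteq> V" and PV: "P \<subseteq> V" and disj: "W \<inter> P = {}" and nP: "P \<noteq> {}" and cP: "card P \<le> k"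
    and SE: "SE_coloring W E k L col"
    and hb: "\<forall>v\<in>P. hv v + card {u\<in>P. hv v \<le> hv u} \<le> k"
    and nb: "\<forall>v\<in>P. card (nbhd E v \<inter> W) +
        (if card W mod k = 0 \<or> card P = k then 0 else mod_star (card W) k) \<le> hv v"
  shows "\<exists>col'. SE_coloring (W \<union> P) E k L col' \<and> (\<forall>v\<in>W. col' v = col v)"
proof -
  have fV: "finite V" using G unfolding graph_def by auto
  have fW: "finite W" using finite_subset[OF WV fV] .
  have fP: "finite P" using finite_subset[OF PV fV] .
  define fr where "fr = (card W mod k = 0 \<or> card P = k)"
  define Full where "Full = {c. card (color_class W col c) = ceil_div (card W) k}"
  define F where "F = (\<lambda>v. col ` (nbhd E v \<inter> W) \<union> (if fr then {} else Full))"
  have Wne: "\<not> fr \<Longrightarrow> W \<noteq> {}" unfolding fr_def by auto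
  have Fullfin: "\<not> fr \<Longrightarrow> finite Full"
  proof -
    assume nf: "\<not> fr"
    have "card W \<ge> 1" using Wne[OF nf] fW by (simp add: Suc_le_eq card_gt_0_iff)
    then have "ceil_div (card W) k \<ge> 1" using cd_decomp[OF k1] by auto
    then have "Full \<subseteq> col ` W" unfolding Full_def by (rule full_finite[OF fW])
    thus "finite Full" by (rule finite_subset[OF _ finite_imageI[OF fW]])
  qed
  have Fullc: "\<not> fr \<Longrightarrow> card Full \<le> mod_star (card W) k"
  proof -
    assume nf: "\<not> fr"
    have "W \<noteq> {} \<longrightarrow> (\<forall>c. card (color_class W col c) \<le> ceil_div (card W) k) \<and>
       card {c. card (color_class W col c) = ceil_div (card W) k} \<le> mod_star (card W) k"
      using SE unfolding SE_coloring_def by (rule conjunct2)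
    thus ?thesis using Wne[OF nf] unfolding Full_def by (rule mp[THEN conjunct2])
  qed
  have Ffin: "\<forall>v\<in>P. finite (F v) \<and> card (F v) \<le> hv v"
  proof
    fix v assume v: "v \<in> P"
    have f1: "finite (col ` (nbhd E v \<inter> W))" using fW by auto
    have c1: "card (col ` (nbhd E v \<inter> W)) \<le> card (nbhd E v \<inter> W)"
      using fW by (intro card_image_le) auto
    show "finite (F v) \<and> card (F v) \<le> hv v"
    proof (cases fr)
      case True
      then have "F v = col ` (nbhd E v \<inter> W)" unfolding F_def by simp
      moreover have "card (nbhd E v \<inter> W) \<le> hv v" using nb v True unfolding fr_def by auto
      ultimately show ?thesis using f1 c1 by simp
    next
      case False
      then have "F v = col ` (nbhd E v \<inter> W) \<union> Full" unfolding F_def by simp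
      moreover have "card (col ` (nbhd E v \<inter> W) \<union> Full) \<le> card (nbhd E v \<inter> W) + mod_star (card W) k"
        using card_Un_le[of "col ` (nbhd E v \<inter> W)" Full] c1 Fullc[OF False] by linarith
      moreover have "card (nbhd E v \<inter> W) + mod_star (card W) k \<le> hv v"
        using nb v False unfolding fr_def by auto
      ultimately show ?thesis using f1 Fullfin[OF False] by auto
    qed
  qed
  have Lfin: "\<forall>v\<in>P. finite (L v) \<and> card (L v) = k" using LA PV unfolding list_assignment_def by auto
  obtain g where g: "inj_on g P" "\<forall>v\<in>P. g v \<in> L v \<and> g v \<notin> F v"
    using greedy[OF fP Lfin Ffin hb] by blast
  have prp: "\<forall>v\<in>P. \<forall>u\<in>W. E v u \<longrightarrow> g v \<noteq> col u"
  proof (intro ballI impI)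
    fix v u assume "v \<in> P" "u \<in> W" "E v u"
    then have "col u \<in> F v" unfolding F_def by (auto simp: in_nbhd)
    thus "g v \<noteq> col u" using g \<open>v \<in> P\<close> by auto
  qed
  have cond: "card W mod k = 0 \<or> card P = k \<or>
       (\<forall>v\<in>P. card (color_class W col (g v)) < ceil_div (card W) k)"
  proof (cases fr)
    case True thus ?thesis unfolding fr_def by auto
  next
    case False
    have "\<forall>v\<in>P. card (color_class W col (g v)) < ceil_div (card W) k"
    proof
      fix v assume v: "v \<in> P"
      have "W \<noteq> {} \<longrightarrow> (\<forall>c. card (color_class W col c) \<le> ceil_div (card W) k)"
        using SE unfolding SE_coloring_def by blast
      then have "card (color_class W col (g v)) \<le> ceil_div (card W) k"
        using Wne[OF False] by blast
      moreover have "g v \<notin> Full" using g v False unfolding F_def by auto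
      ultimately show "card (color_class W col (g v)) < ceil_div (card W) k"
        unfolding Full_def by auto
    qed
    thus ?thesis by blast
  qed
  have sym: "\<forall>u v. E u v \<longrightarrow> E v u" and irr: "\<forall>v. \<not> E v v" using G unfolding graph_def by auto
  have gL: "\<forall>v\<in>P. g v \<in> L v" using g by auto
  have "SE_coloring (W \<union> P) E k L (\<lambda>v. if v \<in> P then g v else col v)"
    by (rule ext_block[OF k1 fW fP disj cP nP SE g(1) gL prp sym irr cond])
  moreover have "\<forall>v\<in>W. (\<lambda>v. if v \<in> P then g v else col v) v = col v" using disj by auto
  ultimately show ?thesis by blast
qed

lemma card_less_nbr: "finite N \<Longrightarrow> z \<in> N \<Longrightarrow> z \<in> D \<Longrightarrow> card (N - D) < card N"
  by (rule psubset_card_mono) auto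

lemma nonroot_out:
  assumes G: "graph V E" and B: "bug V E S r" and cS: "card S \<ge> 2" and v: "v \<in> S" "v \<noteq> r"
  shows "card (nbhd E v - S) \<le> 1"
proof -
  have ic: "induced_connected E S" using B unfolding bug_def by auto
  obtain z where z: "z \<in> S" "E v z" using conn_nbr2[OF ic v(1) cS] by auto
  have "card (nbhd E v - S) < card (nbhd E v)"
    using card_less_nbr[OF nb_fin(1)[OF G], of z v S] z by (simp add: in_nbhd)
  thus ?thesis using nonroot_deg[OF G B v] by simp
qed

theorem corollary4p3:
  fixes V :: "'a set" and E :: "'a \<Rightarrow> 'a \<Rightarrow> bool" and L :: "'a \<Rightarrow> 'c set"
    and S :: "'a set" and r :: 'a and k :: nat
  assumes "k \<ge> 3"
    and "graph V E"
    and "list_assignment V k L"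
    and "bug V E S r"
    and "degree E r \<le> k"
    and "k + 1 \<le> card S" and "card S \<le> 2 * k"
    and "\<exists>x\<in>S. \<exists>y\<in>S. x \<noteq> y \<and> \<not> E x y \<and> hidden E S x \<and> hidden E S y"
  shows "safe V E k L S"
  unfolding safe_def
proof (intro allI impI)
  fix f :: "'a \<Rightarrow> 'c"
  assume SEf: "SE_coloring (V - S) E k L f"
  note k3 = assms(1) and G = assms(2) and LA = assms(3) and B = assms(4) and degr = assms(5)
  have k1: "k \<ge> 1" using k3 by simp
  have fV: "finite V" using G unfolding graph_def by auto
  have SV: "S \<subseteq> V" and rS: "r \<in> S" using B unfolding bug_def by auto
  have fS: "finite S" using finite_subset[OF SV fV] .
  have cS4: "card S \<ge> 4" using assms(6) k3 by simp
  have cS2: "card S \<ge> 2" using cS4 by simp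
  obtain gv K hh u where cfg: "good_config E S r gv K hh u"
    using config_exists[OF G B cS4 assms(8)] by blast
  have gvh: "hidden E S gv" and KS: "K \<subseteq> S" and gvK: "gv \<notin> K" and fK: "finite K"
    and cK: "card K \<le> 3" and hhK: "hh \<in> K" and NhhK: "nbhd E hh \<subseteq> K" and uK: "u \<in> K"
    and uhh: "u \<noteq> hh" and ur: "u \<noteq> r" and uz: "\<exists>z\<in>K. E u z"
    and rK: "(r \<in> K \<and> (\<exists>z\<in>K. E r z)) \<or> r = gv"
    using cfg unfolding good_config_def by auto
  have gvS: "gv \<in> S" using hidden_S[OF gvh] .
  define j where "j = card S - k"
  have j1: "j \<ge> 1" and jk: "j \<le> k" using assms(6,7) j_def by auto
  define A where "A = S - insert gv K"
  have iS: "insert gv K \<subseteq> S" using gvS KS by auto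
  have cA: "card A = card S - card (insert gv K)" using card_Diff_subset[OF _ iS] fK A_def by auto
  have "card (insert gv K) \<le> 4" using card_ins_le[OF fK, of gv] cK by simp
  then have "j - 1 \<le> card A" using cA j_def k3 by simp
  then obtain T' where T': "T' \<subseteq> A" "card T' = j - 1" "finite T'"
    using obtain_subset_with_card_n by blast
  define T where "T = insert gv T'"
  have gvT': "gv \<notin> T'" using T' A_def by auto
  have cT: "card T = j" using T' gvT' j1 T_def by simp
  have TS: "T \<subseteq> S" using T' gvS A_def T_def by auto
  have fT: "finite T" using finite_subset[OF TS fS] .
  define D where "D = S - T"
  have DS: "D \<subseteq> S" using D_def by auto
  have fD: "finite D" using finite_subset[OF DS fS] .
  have cD: "card D = k" using card_Diff_subset[OF fT TS] cT j_def assms(6) D_def by simp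
  have KD: "K \<subseteq> D" using KS gvK T' A_def T_def D_def by auto
  have TD: "T \<inter> D = {}" using D_def by auto
  have STD: "S = T \<union> D" using TS D_def by auto
  have gvT: "gv \<in> T" using T_def by simp
  have Tnr: "\<forall>v\<in>T. v \<noteq> gv \<longrightarrow> v \<noteq> r"
  proof (intro ballI impI)
    fix v assume "v \<in> T" "v \<noteq> gv"
    then have "v \<in> A" using T' T_def by auto
    thus "v \<noteq> r" using rK A_def by auto
  qed
  define ov where "ov = (\<lambda>v. card (nbhd E v - S))"
  have ov1: "\<forall>v\<in>T. ov v \<le> 1"
  proof
    fix v assume v: "v \<in> T"
    show "ov v \<le> 1"
    proof (cases "v = gv")
      case True
      then have "nbhd E v - S = {}" using hidden_N[OF gvh] by auto
      then have "card (nbhd E v - S) = 0" by (metis card.empty)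
      thus ?thesis unfolding ov_def by simp
    next
      case False
      thus ?thesis using nonroot_out[OF G B cS2] v TS Tnr unfolding ov_def by auto
    qed
  qed
  have "nbhd E gv - S = {}" using hidden_N[OF gvh] by auto
  then have ovgv: "ov gv = 0" unfolding ov_def by (metis card.empty)
  have NW0: "\<forall>v. nbhd E v \<inter> (V - S) = nbhd E v - S" using nb_fin(2)[OF G] by auto
  define W0 where "W0 = V - S"
  have W0V: "W0 \<subseteq> V" using W0_def by auto
  have TV: "T \<subseteq> V" using TS SV by auto
  have W0T: "W0 \<inter> T = {}" using TS W0_def by auto
  have Tne: "T \<noteq> {}" using gvT by auto
  obtain c1 where c1: "SE_coloring (W0 \<union> T) E k L c1" "\<forall>v\<in>W0. c1 v = f v"
  proof -
    define t where "t = card W0 mod k"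
    show ?thesis
    proof (cases "t = 0 \<or> j = k")
      case True
      have hb: "\<forall>v\<in>T. (0 + ov v) + card {u\<in>T. 0 + ov v \<le> 0 + ov u} \<le> k"
        by (rule blockT_cond[OF fT gvT ovgv ov1]) (use cT jk in simp)
      have nb: "\<forall>v\<in>T. card (nbhd E v \<inter> W0) +
        (if card W0 mod k = 0 \<or> card T = k then 0 else mod_star (card W0) k) \<le> 0 + ov v"
        using True t_def cT NW0 unfolding ov_def W0_def by auto
      show ?thesis using block_step[OF k1 G LA W0V TV W0T Tne _ _ hb nb] cT jk SEf W0_def that by auto
    next
      case False
      then have t0: "t \<noteq> 0" and jk': "j \<noteq> k" by auto
      have tk: "t < k" using t_def k1 by simp
      have ms: "mod_star (card W0) k = t" using t0 t_def unfolding mod_star_def by simp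
      show ?thesis
      proof (cases "t + j \<le> k")
        case True
        have hb: "\<forall>v\<in>T. (t + ov v) + card {u\<in>T. t + ov v \<le> t + ov u} \<le> k"
          by (rule blockT_cond[OF fT gvT ovgv ov1]) (use cT True in simp)
        have nb: "\<forall>v\<in>T. card (nbhd E v \<inter> W0) +
          (if card W0 mod k = 0 \<or> card T = k then 0 else mod_star (card W0) k) \<le> t + ov v"
          using t0 jk' t_def cT ms NW0 unfolding ov_def W0_def by auto
        show ?thesis using block_step[OF k1 G LA W0V TV W0T Tne _ _ hb nb] cT jk SEf W0_def that by auto
      next
        case False
        have "k - t - 1 \<le> card T'" using T' False tk by simp
        then obtain T1' where T1': "T1' \<subseteq> T'" "card T1' = k - t - 1" "finite T1'"
          using obtain_subset_with_card_n by blast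
        define T1 where "T1 = insert gv T1'"
        have "gv \<notin> T1'" using T1' gvT' by auto
        then have cT1: "card T1 = k - t" using T1' tk T1_def by simp
        have T1T: "T1 \<subseteq> T" using T1' T_def T1_def by auto
        have fT1: "finite T1" using finite_subset[OF T1T fT] .
        have gvT1: "gv \<in> T1" using T1_def by simp
        have T1V: "T1 \<subseteq> V" using T1T TV by auto
        have W0T1: "W0 \<inter> T1 = {}" using T1T W0T by auto
        have T1ne: "T1 \<noteq> {}" using gvT1 by auto
        have ov1': "\<forall>v\<in>T1. ov v \<le> 1" using ov1 T1T by auto
        have hb: "\<forall>v\<in>T1. (t + ov v) + card {u\<in>T1. t + ov v \<le> t + ov u} \<le> k"
          by (rule blockT_cond[OF fT1 gvT1 ovgv ov1']) (use cT1 tk in simp)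
        have nb: "\<forall>v\<in>T1. card (nbhd E v \<inter> W0) +
          (if card W0 mod k = 0 \<or> card T1 = k then 0 else mod_star (card W0) k) \<le> t + ov v"
          using t0 t_def cT1 ms NW0 unfolding ov_def W0_def by auto
        obtain c0 where c0: "SE_coloring (W0 \<union> T1) E k L c0" "\<forall>v\<in>W0. c0 v = f v"
          using block_step[OF k1 G LA W0V T1V W0T1 T1ne _ _ hb nb] cT1 tk SEf W0_def by auto
        define W1 where "W1 = W0 \<union> T1"
        define T2 where "T2 = T - T1"
        have fW0: "finite W0" using finite_subset[OF W0V fV] .
        have cW1: "card W1 = card W0 + (k - t)" using card_Un_disjoint[OF fW0 fT1 W0T1] cT1 W1_def by simp
        have "card W0 = card W0 div k * k + t" using t_def by simp
        then have "card W1 = (card W0 div k + 1) * k" using cW1 tk by simp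
        then have W1mod: "card W1 mod k = 0" by simp
        have cT2: "card T2 = j - (k - t)" using card_Diff_subset[OF fT1 T1T] cT cT1 T2_def by simp
        have fT2: "finite T2" using fT T2_def by auto
        have T2c: "card T2 + 2 \<le> k" using cT2 tk jk jk' False by simp
        have "card T2 \<ge> 1" using cT2 False tk by arith
        then have T2ne: "T2 \<noteq> {}" by auto
        have W1V: "W1 \<subseteq> V" using W0V T1V W1_def by auto
        have T2V: "T2 \<subseteq> V" using TV T2_def by auto
        have W1T2: "W1 \<inter> T2 = {}" using W0T T2_def W1_def by auto
        define hv2 where "hv2 = (\<lambda>v. card (nbhd E v \<inter> W1))"
        have hv2le: "\<forall>v\<in>T2. hv2 v \<le> 2"
        proof
          fix v assume v: "v \<in> T2"
          then have "v \<noteq> r" "v \<in> S" using Tnr gvT1 T2_def TS by auto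
          then have "card (nbhd E v) \<le> 2" using nonroot_deg[OF G B] by auto
          moreover have "card (nbhd E v \<inter> W1) \<le> card (nbhd E v)"
            using nb_fin(1)[OF G] by (intro card_mono) auto
          ultimately show "hv2 v \<le> 2" unfolding hv2_def by simp
        qed
        have hb2: "\<forall>v\<in>T2. hv2 v + card {u\<in>T2. hv2 v \<le> hv2 u} \<le> k"
          by (rule blockT2_cond[OF fT2 T2c hv2le])
        have nb2: "\<forall>v\<in>T2. card (nbhd E v \<inter> W1) +
          (if card W1 mod k = 0 \<or> card T2 = k then 0 else mod_star (card W1) k) \<le> hv2 v"
          using W1mod unfolding hv2_def by simp
        obtain c2 where c2: "SE_coloring (W1 \<union> T2) E k L c2" "\<forall>v\<in>W1. c2 v = c0 v"
          using block_step[OF k1 G LA W1V T2V W1T2 T2ne _ c0(1)[folded W1_def] hb2 nb2] T2c by auto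
        have "W1 \<union> T2 = W0 \<union> T" using T1T W1_def T2_def by auto
        moreover have "\<forall>v\<in>W0. c2 v = f v" using c2(2) c0(2) W1_def by auto
        ultimately show ?thesis using c2(1) that by auto
      qed
    qed
  qed
  define W where "W = W0 \<union> T"
  have WV: "W \<subseteq> V" using W0V TV W_def by auto
  have DV: "D \<subseteq> V" using DS SV by auto
  have WD: "W \<inter> D = {}" using TD W0_def DS W_def by auto
  have Dne: "D \<noteq> {}" using hhK KD by auto
  define hv where "hv = (\<lambda>v. card (nbhd E v - D))"
  have "nbhd E hh - D = {}" using NhhK KD by auto
  then have hvhh: "hv hh = 0" unfolding hv_def by (metis card.empty)
  have hvu: "hv u \<le> 1"
  proof -
    obtain z where z: "z \<in> K" "E u z" using uz by blast
    have uS: "u \<in> S" using uK KS by auto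
    have "card (nbhd E u - D) < card (nbhd E u)"
      using card_less_nbr[OF nb_fin(1)[OF G], of z u D] z KD by (auto simp: in_nbhd)
    thus ?thesis using nonroot_deg[OF G B uS ur] unfolding hv_def by simp
  qed
  have hv2: "\<forall>v\<in>D. v \<noteq> r \<longrightarrow> hv v \<le> 2"
  proof (intro ballI impI)
    fix v assume "v \<in> D" "v \<noteq> r"
    then have "card (nbhd E v) \<le> 2" using nonroot_deg[OF G B] DS by auto
    moreover have "card (nbhd E v - D) \<le> card (nbhd E v)"
      using nb_fin(1)[OF G] by (intro card_mono) auto
    ultimately show "hv v \<le> 2" unfolding hv_def by simp
  qed
  have hvr: "r \<in> D \<longrightarrow> hv r + 1 \<le> k"
  proof
    assume rD: "r \<in> D"
    then have "r \<noteq> gv" using gvT TD by auto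
    then obtain z where z: "z \<in> K" "E r z" using rK by blast
    have "card (nbhd E r - D) < card (nbhd E r)"
      using card_less_nbr[OF nb_fin(1)[OF G], of z r D] z KD by (auto simp: in_nbhd)
    thus "hv r + 1 \<le> k" using degr unfolding hv_def degree_def by simp
  qed
  have hb: "\<forall>v\<in>D. hv v + card {w\<in>D. hv v \<le> hv w} \<le> k"
    by (rule blockD_cond[OF fD cD k3 _ hvhh _ uhh hvu hv2 hvr]) (use hhK uK KD in auto)
  have nb: "\<forall>v\<in>D. card (nbhd E v \<inter> W) +
      (if card W mod k = 0 \<or> card D = k then 0 else mod_star (card W) k) \<le> hv v"
  proof
    fix v assume "v \<in> D"
    have "card (nbhd E v \<inter> W) \<le> card (nbhd E v - D)"
      using nb_fin(1)[OF G] WD by (intro card_mono) auto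
    thus "card (nbhd E v \<inter> W) +
      (if card W mod k = 0 \<or> card D = k then 0 else mod_star (card W) k) \<le> hv v"
      using cD unfolding hv_def by simp
  qed
  obtain c3 where c3: "SE_coloring (W \<union> D) E k L c3" "\<forall>v\<in>W. c3 v = c1 v"
    using block_step[OF k1 G LA WV DV WD Dne _ c1(1)[folded W_def] hb nb] cD by auto
  have "W \<union> D = V" using STD SV W_def W0_def by auto
  moreover have "\<forall>v\<in>V - S. c3 v = f v" using c3(2) c1(2) W_def W0_def by auto
  ultimately show "\<exists>g. SE_coloring V E k L g \<and> (\<forall>v\<in>V - S. g v = f v)" using c3(1) by auto
qed

end
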